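(* Let $\Delta$ be a pure $d$-dimensional simplicial complex that is acyclic in positive codimension (APC), and fix $0\le i<d$. Let $\Upsilon$ be an $i$-dimensional spanning tree of $\Delta$, let $\Theta=\Delta_i\setminus\Upsilon_i$ be the set of $i$-dimensional faces of $\Delta$ not in $\Upsilon$, and let $\tilde L$ be the reduced Laplacian, i.e. the square submatrix of $L_{\Delta,i}$ with rows and columns indexed by $\Theta$. Suppose that $\tilde H_{i-1}(\Upsilon;\mathbb{Z})=0$. Then $$K_i(\Delta)\cong \mathbb{Z}^{\Theta}/\operatorname{im}\tilde L.$$
   Context: For a finite simplicial complex $\Delta$, $\Delta_i$ denotes its set of $i$-dimensional faces, $\Delta_{(i)}$ its $i$-skeleton (all faces of dimension $\le i$), and $f_i(\Delta)=|\Delta_i|$. $C_i(\Delta;\mathbb{Z})$ is the free abelian group with basis $\Delta_i$ (each face given a fixed orientation; $C_{-1}=\mathbb{Z}$ is spanned by the empty face), $\partial_i=\partial_{\Delta,i}:C_i(\Delta;\mathbb{Z})\to C_{i-1}(\Delta;\mathbb{Z})$ is the simplicial boundary map, and $\partial^*_i:C_{i-1}(\Delta;\mathbb{Z})\to C_i(\Delta;\mathbb{Z})$ is the coboundary map, i.e. the transpose of $\partial_i$ with respect to the standard bases. The ($i$-dimensional, up-down) combinatorial Laplacian is $L_{\Delta,i}=\partial_{i+1}\partial^*_{i+1}:C_i(\Delta;\mathbb{Z})\to C_i(\Delta;\mathbb{Z})$. The $i$-dimensional critical group is $K_i(\Delta)=\ker\partial_i/\operatorname{im}(\partial_{i+1}\partial^*_{i+1})$.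 $\tilde H_i$ denotes reduced simplicial homology and $\beta_i(\Delta)=\dim_{\mathbb{Q}}\tilde H_i(\Delta;\mathbb{Q})$. A complex is pure if all maximal faces have the same dimension; a pure $d$-dimensional complex is APC if $\tilde H_j(\Delta;\mathbb{Q})=0$ for all $j<d$. If $\Gamma$ is a pure $k$-dimensional complex, a subcomplex $\Upsilon\subseteq\Gamma$ with $\Upsilon_{(k-1)}=\Gamma_{(k-1)}$ is a (simplicial) spanning tree of $\Gamma$ if (1) $\tilde H_k(\Upsilon;\mathbb{Z})=0$, (2) $\tilde H_{k-1}(\Upsilon;\mathbb{Q})=0$, and (3) $f_k(\Upsilon)=f_k(\Gamma)-\beta_k(\Gamma)+\beta_{k-1}(\Gamma)$. An $i$-dimensional spanning tree of $\Delta$ is a spanning tree of the skeleton $\Delta_{(i)}$. Chains supported on $\Upsilon$ or on $\Theta$ are regarded as elements of $C_i(\Delta;\mathbb{Z})$; $C_i(\Theta;\mathbb{Z})$ denotes the span of the faces in $\Theta$, identified with $\mathbb{Z}^\Theta$. *)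

theory Defs
  imports Complex_Main "HOL-Algebra.Group" "HOL-Algebra.Coset" "HOL-Library.Function_Algebras"
begin

(* A finite abstract simplicial complex on a linearly ordered vertex set; faces are
   finite vertex sets, the empty face is the unique (-1)-dimensional face.
   Each face is oriented by the increasing order of its vertices. *)
definition simplicial_complex :: "'a set set \<Rightarrow> bool" where
  "simplicial_complex \<Delta> \<longleftrightarrow> finite \<Delta> \<and> (\<forall>F\<in>\<Delta>. finite F) \<and> (\<forall>F\<in>\<Delta>. \<forall>G. G \<subseteq> F \<longrightarrow> G \<in> \<Delta>)"

definition faces :: "'a set set \<Rightarrow> int \<Rightarrow> 'a set set" where
  "faces \<Delta> j = {F\<in>\<Delta>. int (card F) = j + 1}"

definition skeleton :: "'a set set \<Rightarrow> int \<Rightarrow> 'a set set" where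
  "skeleton \<Delta> j = {F\<in>\<Delta>. int (card F) \<le> j + 1}"

definition pure_dim :: "'a set set \<Rightarrow> int \<Rightarrow> bool" where
  "pure_dim \<Delta> d \<longleftrightarrow> simplicial_complex \<Delta> \<and> faces \<Delta> d \<noteq> {} \<and>
     (\<forall>F\<in>\<Delta>. int (card F) \<le> d + 1) \<and> (\<forall>F\<in>\<Delta>. \<exists>G\<in>faces \<Delta> d. F \<subseteq> G)"

(* incidence sign [F : F - {v}] for the increasing-order orientation *)
definition osign :: "'a::linorder set \<Rightarrow> 'a \<Rightarrow> 'r::comm_ring_1" where
  "osign F v = (-1) ^ card {u\<in>F. u < v}"

definition chains :: "'a set set \<Rightarrow> int \<Rightarrow> ('a set \<Rightarrow> 'r::zero) set" where
  "chains \<Delta> j = {c. \<forall>F. F \<notin> faces \<Delta> j \<longrightarrow> c F = 0}"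

definition bd :: "'a::linorder set set \<Rightarrow> int \<Rightarrow> ('a set \<Rightarrow> 'r::comm_ring_1) \<Rightarrow> ('a set \<Rightarrow> 'r)" where
  "bd \<Delta> j c = (\<lambda>G. if G \<in> faces \<Delta> (j - 1)
      then (\<Sum>v\<in>{v. v \<notin> G \<and> insert v G \<in> faces \<Delta> j}. osign (insert v G) v * c (insert v G))
      else 0)"

definition cobd :: "'a::linorder set set \<Rightarrow> int \<Rightarrow> ('a set \<Rightarrow> 'r::comm_ring_1) \<Rightarrow> ('a set \<Rightarrow> 'r)" where
  "cobd \<Delta> j c = (\<lambda>F. if F \<in> faces \<Delta> j then (\<Sum>v\<in>F. osign F v * c (F - {v})) else 0)"

definition laplacian :: "'a::linorder set set \<Rightarrow> int \<Rightarrow> ('a set \<Rightarrow> 'r::comm_ring_1) \<Rightarrow> ('a set \<Rightarrow> 'r)" where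
  "laplacian \<Delta> i c = bd \<Delta> (i + 1) (cobd \<Delta> (i + 1) c)"

definition cycles :: "'a::linorder set set \<Rightarrow> int \<Rightarrow> ('a set \<Rightarrow> 'r::comm_ring_1) set" where
  "cycles \<Delta> j = {c \<in> chains \<Delta> j. bd \<Delta> j c = 0}"

definition boundaries :: "'a::linorder set set \<Rightarrow> int \<Rightarrow> ('a set \<Rightarrow> 'r::comm_ring_1) set" where
  "boundaries \<Delta> j = bd \<Delta> (j + 1) ` chains \<Delta> (j + 1)"

(* \<tilde>H_j(\<Delta>;R) = 0, with R given by the type 'r *)
definition homology_vanishes :: "'r::comm_ring_1 itself \<Rightarrow> 'a::linorder set set \<Rightarrow> int \<Rightarrow> bool" where
  "homology_vanishes R \<Delta> j \<longleftrightarrow> (cycles \<Delta> j :: ('a set \<Rightarrow> 'r) set) \<subseteq> boundaries \<Delta> j"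

definition scaleQ :: "rat \<Rightarrow> ('a set \<Rightarrow> rat) \<Rightarrow> ('a set \<Rightarrow> rat)" where
  "scaleQ a f = (\<lambda>x. a * f x)"

definition betti :: "'a::linorder set set \<Rightarrow> int \<Rightarrow> int" where
  "betti \<Delta> j = int (vector_space.dim scaleQ (cycles \<Delta> j :: ('a set \<Rightarrow> rat) set))
              - int (vector_space.dim scaleQ (boundaries \<Delta> j :: ('a set \<Rightarrow> rat) set))"

definition APC :: "'a::linorder set set \<Rightarrow> int \<Rightarrow> bool" where
  "APC \<Delta> d \<longleftrightarrow> pure_dim \<Delta> d \<and> (\<forall>j<d. homology_vanishes TYPE(rat) \<Delta> j)"

definition spanning_tree :: "'a::linorder set set \<Rightarrow> int \<Rightarrow> 'a set set \<Rightarrow> bool" where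
  "spanning_tree \<Gamma> k \<Upsilon> \<longleftrightarrow> pure_dim \<Gamma> k \<and> simplicial_complex \<Upsilon> \<and> \<Upsilon> \<subseteq> \<Gamma> \<and>
     skeleton \<Upsilon> (k - 1) = skeleton \<Gamma> (k - 1) \<and>
     homology_vanishes TYPE(int) \<Upsilon> k \<and>
     homology_vanishes TYPE(rat) \<Upsilon> (k - 1) \<and>
     int (card (faces \<Upsilon> k)) = int (card (faces \<Gamma> k)) - betti \<Gamma> k + betti \<Gamma> (k - 1)"

definition chain_group :: "'a set set \<Rightarrow> ('a set \<Rightarrow> int) monoid" where
  "chain_group S = \<lparr>carrier = {c. \<forall>F. F \<notin> S \<longrightarrow> c F = 0},
                    mult = (\<lambda>c e. (\<lambda>F. c F + e F)), one = (\<lambda>F. 0)\<rparr>"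

definition critical_group :: "'a::linorder set set \<Rightarrow> int \<Rightarrow> ('a set \<Rightarrow> int) set monoid" where
  "critical_group \<Delta> i =
     ((chain_group (faces \<Delta> i))\<lparr>carrier := cycles \<Delta> i\<rparr>) Mod (laplacian \<Delta> i ` chains \<Delta> i)"

definition reduced_laplacian :: "'a::linorder set set \<Rightarrow> int \<Rightarrow> 'a set set \<Rightarrow> ('a set \<Rightarrow> int) \<Rightarrow> ('a set \<Rightarrow> int)" where
  "reduced_laplacian \<Delta> i \<Theta> c = (\<lambda>F. if F \<in> \<Theta> then laplacian \<Delta> i c F else 0)"

end

theory Submission
  imports Defs
begin

lemma finite_ext:
  assumes "simplicial_complex \<Delta>"
  shows "finite {v. v \<notin> G \<and> insert v G \<in> faces \<Delta> j}"
proof -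
  have "finite (\<Union>\<Delta>)" using assms unfolding simplicial_complex_def by auto
  moreover have "{v. v \<notin> G \<and> insert v G \<in> faces \<Delta> j} \<subseteq> \<Union>\<Delta>"
    unfolding faces_def by auto
  ultimately show ?thesis by (rule finite_subset[rotated])
qed

lemma osign_lt:
  fixes v w :: "'a::linorder"
  assumes "finite H" "v \<notin> H" "w \<notin> H" "v < w"
  shows "(osign (insert v H) v * osign (insert w (insert v H)) w :: int)
       = - (osign (insert w H) w * osign (insert v (insert w H)) v)"
proof -
  have e1: "{u\<in>insert v H. u < v} = {u\<in>H. u < v}" by auto
  have e2: "{u\<in>insert w (insert v H). u < w} = insert v {u\<in>H. u < w}" using assms by auto
  have e3: "{u\<in>insert w H. u < w} = {u\<in>H. u < w}" by auto
  have e4: "{u\<in>insert v (insert w H). u < v} = {u\<in>H. u < v}" using assms by auto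
  have c2: "card (insert v {u\<in>H. u < w}) = Suc (card {u\<in>H. u < w})"
    using assms by simp
  show ?thesis unfolding osign_def e1 e2 e3 e4 c2 by simp
qed

lemma osign_swap:
  fixes v w :: "'a::linorder"
  assumes "finite H" "v \<notin> H" "w \<notin> H" "v \<noteq> w"
  shows "(osign (insert v H) v * osign (insert w (insert v H)) w :: int)
       = - (osign (insert w H) w * osign (insert v (insert w H)) v)"
proof (cases "v < w")
  case True then show ?thesis using osign_lt assms by blast
next
  case False then have "w < v" using assms by auto
  from osign_lt[OF assms(1,3,2) this] show ?thesis by simp
qed

lemma antisym_sum_zero:
  fixes g :: "'b \<times> 'b \<Rightarrow> int"
  assumes "\<And>v w. (v,w) \<in> P \<Longrightarrow> (w,v) \<in> P"
    and "\<And>v w. (v,w) \<in> P \<Longrightarrow> g (w,v) = - g (v,w)"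
  shows "sum g P = 0"
proof -
  have sP: "prod.swap ` P = P"
    using assms(1) by (auto simp: image_iff) (metis swap_simp prod.collapse)
  have "sum g P = sum g (prod.swap ` P)" using sP by simp
  also have "\<dots> = sum (g \<circ> prod.swap) P" by (rule sum.reindex) (intro inj_onI, metis swap_swap)
  also have "\<dots> = sum (\<lambda>p. - g p) P"
    by (rule sum.cong) (auto simp: assms(2))
  also have "\<dots> = - sum g P" by (simp add: sum_negf)
  finally show ?thesis by simp
qed


lemma aux_ring:
  fixes a b x y C :: int
  assumes "a * y = - (x * b)"
  shows "x * (b * C) = - (a * (y * C))"
proof -
  have "a * (y * C) = C * (a * y)" by (simp add: algebra_simps)
  also have "\<dots> = - (x * (b * C))" using assms by (simp add: algebra_simps)
  finally show ?thesis by simp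
qed

lemma bd_bd:
  fixes c :: "'a::linorder set \<Rightarrow> int"
  assumes sc: "simplicial_complex \<Delta>"
  shows "bd \<Delta> (j - 1) (bd \<Delta> j c) = (\<lambda>_. 0)"
proof
  fix H
  show "bd \<Delta> (j - 1) (bd \<Delta> j c) H = 0"
  proof (cases "H \<in> faces \<Delta> (j - 1 - 1)")
    case False then show ?thesis by (simp add: bd_def)
  next
    case True
    have finH: "finite H" using True sc unfolding faces_def simplicial_complex_def by auto
    have cH: "int (card H) = j - 1" using True unfolding faces_def by auto
    define A where "A = {v. v \<notin> H \<and> insert v H \<in> faces \<Delta> (j - 1)}"
    define B where "B = (\<lambda>v. {w. w \<notin> insert v H \<and> insert w (insert v H) \<in> faces \<Delta> j})"
    define g where "g = (\<lambda>(v,w). osign (insert v H) v * (osign (insert w (insert v H)) w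
                       * c (insert w (insert v H))) :: int)"
    define P where "P = {(v,w). v \<notin> H \<and> w \<notin> H \<and> v \<noteq> w \<and> insert w (insert v H) \<in> faces \<Delta> j}"
    have finA: "finite A" unfolding A_def by (rule finite_ext[OF sc])
    have finB: "\<And>v. finite (B v)" unfolding B_def by (rule finite_ext[OF sc])
    have "bd \<Delta> (j - 1) (bd \<Delta> j c) H = (\<Sum>v\<in>A. osign (insert v H) v * bd \<Delta> j c (insert v H))"
      using True by (simp add: bd_def A_def)
    also have "\<dots> = (\<Sum>v\<in>A. \<Sum>w\<in>B v. g (v,w))"
      by (rule sum.cong) (auto simp: A_def B_def g_def bd_def sum_distrib_left)
    also have "\<dots> = sum g (Sigma A B)" using sum.Sigma[OF finA, of B "\<lambda>v w. g (v,w)"] finB by (simp add: case_prod_beta)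
    also have "Sigma A B = P"
    proof
      show "Sigma A B \<subseteq> P" unfolding A_def B_def P_def by auto
      show "P \<subseteq> Sigma A B"
      proof
        fix p assume "p \<in> P"
        then obtain v w where p: "p = (v,w)" "v \<notin> H" "w \<notin> H" "v \<noteq> w"
          "insert w (insert v H) \<in> faces \<Delta> j" unfolding P_def by auto
        have "insert w (insert v H) \<in> \<Delta>" using p unfolding faces_def by auto
        then have "insert v H \<in> \<Delta>" using sc unfolding simplicial_complex_def by blast
        moreover have "int (card (insert v H)) = j - 1 + 1" using p finH cH by simp
        ultimately have "insert v H \<in> faces \<Delta> (j - 1)" unfolding faces_def by auto
        then show "p \<in> Sigma A B" using p unfolding A_def B_def by auto
      qed
    qed
    also have "sum g P = 0"
    proof (rule antisym_sum_zero)
      fix v w assume "(v,w) \<in> P"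
      then show "(w,v) \<in> P" unfolding P_def by (auto simp: insert_commute)
    next
      fix v w assume "(v,w) \<in> P"
      then have h: "v \<notin> H" "w \<notin> H" "v \<noteq> w" unfolding P_def by auto
      show "g (w,v) = - g (v,w)"
        using osign_swap[OF finH h] unfolding g_def
        by (simp add: insert_commute) (rule aux_ring)
    qed
    finally show ?thesis .
  qed
qed

lemma bd_lin:
  "bd \<Delta> j (\<lambda>F. \<Sum>t\<in>T. k t * f t F) = (\<lambda>G. \<Sum>t\<in>T. (k t :: int) * bd \<Delta> j (f t) G)"
  unfolding bd_def
  by (auto simp: sum_distrib_left algebra_simps intro!: ext sum.swap)

lemma bd_diff:
  "bd \<Delta> j (\<lambda>F. a F - b F) = (\<lambda>G. bd \<Delta> j a G - (bd \<Delta> j b G :: int))"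
  unfolding bd_def by (auto simp: sum_subtractf algebra_simps intro!: ext)

lemma bd_cong:
  assumes "\<And>F. F \<in> faces \<Delta> j \<Longrightarrow> c F = c' F"
  shows "bd \<Delta> j c = (bd \<Delta> j c' :: _ \<Rightarrow> int)"
  unfolding bd_def using assms by (auto intro!: ext sum.cong)

lemma bd_chains: "bd \<Delta> j c \<in> chains \<Delta> (j - 1)"
  unfolding bd_def chains_def by auto

lemma finite_faces: "simplicial_complex \<Delta> \<Longrightarrow> finite (faces \<Delta> j)"
  unfolding simplicial_complex_def faces_def by auto

lemma cobd_transpose:
  fixes x :: "'a::linorder set \<Rightarrow> int"
  assumes sc: "simplicial_complex \<Delta>" and F: "F \<in> faces \<Delta> j"
  shows "cobd \<Delta> j x F = (\<Sum>G\<in>faces \<Delta> (j - 1). bd \<Delta> j (\<lambda>H. if H = F then 1 else 0) G * x G)"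
proof -
  have finF: "finite F" and FD: "F \<in> \<Delta>" and cF: "int (card F) = j + 1"
    using F sc unfolding faces_def simplicial_complex_def by auto
  have sub: "\<And>v. v \<in> F \<Longrightarrow> F - {v} \<in> faces \<Delta> (j - 1)"
  proof -
    fix v assume v: "v \<in> F"
    have "F - {v} \<in> \<Delta>" using FD sc unfolding simplicial_complex_def by blast
    moreover have "int (card (F - {v})) = j - 1 + 1"
    proof -
      have "card (F - {v}) = card F - 1" using v finF by (simp add: card_Diff_singleton)
      moreover have "card F > 0" using v finF card_gt_0_iff by auto
      ultimately show ?thesis using cF by (simp add: of_nat_diff)
    qed
    ultimately show "F - {v} \<in> faces \<Delta> (j - 1)" unfolding faces_def by auto
  qed
  have fin: "finite (faces \<Delta> (j - 1))" by (rule finite_faces[OF sc])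
  have "cobd \<Delta> j x F = (\<Sum>v\<in>F. osign F v * x (F - {v}))" using F by (simp add: cobd_def)
  also have "\<dots> = (\<Sum>v\<in>F. \<Sum>G\<in>faces \<Delta> (j - 1). if G = F - {v} then osign F v * x G else 0)"
    by (rule sum.cong[OF refl]) (simp add: sum.delta[OF fin] sub)
  also have "\<dots> = (\<Sum>G\<in>faces \<Delta> (j - 1). \<Sum>v\<in>F. if G = F - {v} then osign F v * x G else 0)"
    by (rule sum.swap)
  also have "\<dots> = (\<Sum>G\<in>faces \<Delta> (j - 1). bd \<Delta> j (\<lambda>H. if H = F then 1 else 0) G * x G)"
  proof (rule sum.cong[OF refl])
    fix G assume G: "G \<in> faces \<Delta> (j - 1)"
    have "(\<Sum>v\<in>F. if G = F - {v} then osign F v * x G else 0)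
        = (\<Sum>v\<in>{v\<in>F. G = F - {v}}. osign F v * x G)"
      by (rule sum.inter_filter[symmetric]) (rule finF)
    also have "{v\<in>F. G = F - {v}} = {v \<in> {v. v \<notin> G \<and> insert v G \<in> faces \<Delta> j}. insert v G = F}"
      using F by (auto simp: insert_absorb)
    also have "(\<Sum>v\<in>{v \<in> {v. v \<notin> G \<and> insert v G \<in> faces \<Delta> j}. insert v G = F}. osign F v * x G)
       = (\<Sum>v\<in>{v \<in> {v. v \<notin> G \<and> insert v G \<in> faces \<Delta> j}. insert v G = F}. osign (insert v G) v * x G)"
      by (rule sum.cong) auto
    also have "\<dots> = (\<Sum>v\<in>{v. v \<notin> G \<and> insert v G \<in> faces \<Delta> j}.
                        if insert v G = F then osign (insert v G) v * x G else 0)"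
      by (rule sum.inter_filter) (rule finite_ext[OF sc])
    also have "\<dots> = bd \<Delta> j (\<lambda>H. if H = F then 1 else 0) G * x G"
      using G unfolding bd_def by (simp add: sum_distrib_right) (intro sum.cong, auto)
    finally show "(\<Sum>v\<in>F. if G = F - {v} then osign F v * x G else 0)
        = bd \<Delta> j (\<lambda>H. if H = F then 1 else 0) G * x G" .
  qed
  finally show ?thesis .
qed

definition ind :: "'a set \<Rightarrow> 'a set \<Rightarrow> int" where
  "ind F = (\<lambda>H. if H = F then 1 else 0)"

lemma bd_add: "bd \<Delta> j (\<lambda>F. a F + b F) = (\<lambda>G. bd \<Delta> j a G + (bd \<Delta> j b G :: int))"
  unfolding bd_def by (auto simp: sum.distrib algebra_simps intro!: ext)

lemma bd_neg: "bd \<Delta> j (\<lambda>F. - a F) = (\<lambda>G. - (bd \<Delta> j a G :: int))"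
  unfolding bd_def by (auto simp: sum_negf algebra_simps intro!: ext)

lemma cobd_add: "cobd \<Delta> j (\<lambda>F. a F + b F) = (\<lambda>G. cobd \<Delta> j a G + (cobd \<Delta> j b G :: int))"
  unfolding cobd_def by (auto simp: sum.distrib algebra_simps intro!: ext)

lemma cobd_neg: "cobd \<Delta> j (\<lambda>F. - a F) = (\<lambda>G. - (cobd \<Delta> j a G :: int))"
  unfolding cobd_def by (auto simp: sum_negf algebra_simps intro!: ext)

lemma lap_add: "laplacian \<Delta> j (\<lambda>F. a F + b F) = (\<lambda>G. laplacian \<Delta> j a G + (laplacian \<Delta> j b G :: int))"
  unfolding laplacian_def cobd_add bd_add ..

lemma lap_neg: "laplacian \<Delta> j (\<lambda>F. - a F) = (\<lambda>G. - (laplacian \<Delta> j a G :: int))"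
  unfolding laplacian_def cobd_neg bd_neg ..

lemma lap_zero: "laplacian \<Delta> j (\<lambda>F. 0) = (\<lambda>G. 0 :: int)"
  unfolding laplacian_def cobd_def bd_def by auto

locale st =
  fixes \<Delta> \<Upsilon> :: "'a::linorder set set" and i :: int
  assumes scD: "simplicial_complex \<Delta>"
    and scU: "simplicial_complex \<Upsilon>"
    and UD: "\<Upsilon> \<subseteq> \<Delta>"
    and Ucard: "\<forall>F\<in>\<Upsilon>. int (card F) \<le> i + 1"
    and feq: "\<forall>j. j \<le> i - 1 \<longrightarrow> faces \<Upsilon> j = faces \<Delta> j"
    and Hi: "homology_vanishes TYPE(int) \<Upsilon> i"
    and Him1: "homology_vanishes TYPE(int) \<Upsilon> (i - 1)"
begin

definition Th where "Th = faces \<Delta> i - faces \<Upsilon> i"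

lemma faces_UD: "faces \<Upsilon> j \<subseteq> faces \<Delta> j"
  using UD unfolding faces_def by auto

lemma Th_sub: "Th \<subseteq> faces \<Delta> i" unfolding Th_def by auto

lemma fin_Th: "finite Th" using finite_faces[OF scD] Th_sub finite_subset by blast

lemma bd_U_eq:
  assumes c: "(c :: 'a set \<Rightarrow> int) \<in> chains \<Upsilon> i"
  shows "bd \<Upsilon> i c = bd \<Delta> i c"
proof
  fix G
  have fe: "faces \<Upsilon> (i - 1) = faces \<Delta> (i - 1)" using feq by auto
  show "bd \<Upsilon> i c G = bd \<Delta> i c G"
  proof (cases "G \<in> faces \<Delta> (i - 1)")
    case False then show ?thesis unfolding bd_def fe by simp
  next
    case True
    have "(\<Sum>v\<in>{v. v \<notin> G \<and> insert v G \<in> faces \<Upsilon> i}. osign (insert v G) v * c (insert v G))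
        = (\<Sum>v\<in>{v. v \<notin> G \<and> insert v G \<in> faces \<Delta> i}. osign (insert v G) v * c (insert v G))"
      apply (rule sum.mono_neutral_left[OF finite_ext[OF scD]])
      using faces_UD c unfolding chains_def by auto
    then show ?thesis using True unfolding bd_def fe by simp
  qed
qed

lemma bd_U_eq2: "bd \<Upsilon> (i - 1) = bd \<Delta> (i - 1)"
proof -
  have fe1: "faces \<Upsilon> (i - 1) = faces \<Delta> (i - 1)" and fe2: "faces \<Upsilon> (i - 1 - 1) = faces \<Delta> (i - 1 - 1)"
    using feq by auto
  show ?thesis by (intro ext) (simp only: bd_def fe1 fe2)
qed

lemma no_top: "faces \<Upsilon> (i + 1) = {}"
  using Ucard unfolding faces_def by force

lemma cyc_zero:
  fixes z :: "'a set \<Rightarrow> int"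
  assumes z: "z \<in> cycles \<Delta> i" and zt: "\<forall>t\<in>Th. z t = 0"
  shows "z = (\<lambda>_. 0)"
proof -
  have zc: "z \<in> chains \<Upsilon> i"
    using z zt unfolding cycles_def chains_def Th_def by auto
  have "bd \<Upsilon> i z = (\<lambda>_. 0)" using bd_U_eq[OF zc] z unfolding cycles_def by auto
  then have "z \<in> cycles \<Upsilon> i" using zc unfolding cycles_def by (simp add: zero_fun_def)
  then have "z \<in> boundaries \<Upsilon> i" using Hi unfolding homology_vanishes_def by auto
  then obtain c where "z = bd \<Upsilon> (i + 1) c" unfolding boundaries_def by auto
  then show ?thesis unfolding bd_def using no_top by (auto intro!: ext)
qed

lemma gam_ex:
  assumes "t \<in> Th"
  shows "\<exists>g. g \<in> chains \<Upsilon> i \<and> bd \<Upsilon> i g = bd \<Delta> i (ind t)"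
proof -
  have ch: "chains \<Upsilon> (i - 1) = chains \<Delta> (i - 1)" using feq unfolding chains_def by auto
  have "bd \<Delta> i (ind t) \<in> cycles \<Upsilon> (i - 1)"
    unfolding cycles_def ch bd_U_eq2 using bd_chains bd_bd[OF scD, of i] by (simp add: zero_fun_def)
  then have "bd \<Delta> i (ind t) \<in> boundaries \<Upsilon> (i - 1)" using Him1 unfolding homology_vanishes_def by auto
  then show ?thesis unfolding boundaries_def by auto
qed

definition gam where "gam t = (SOME g. g \<in> chains \<Upsilon> i \<and> bd \<Upsilon> i g = bd \<Delta> i (ind t))"

definition cc where "cc t = (\<lambda>F. ind t F - gam t F)"

lemma gam: "t \<in> Th \<Longrightarrow> gam t \<in> chains \<Upsilon> i \<and> bd \<Upsilon> i (gam t) = bd \<Delta> i (ind t)"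
  using someI_ex[OF gam_ex] unfolding gam_def by blast

lemma cc_cycle: "t \<in> Th \<Longrightarrow> cc t \<in> cycles \<Delta> i"
proof -
  assume t: "t \<in> Th"
  have "cc t \<in> chains \<Delta> i"
    using gam[OF t] faces_UD Th_sub t unfolding cc_def chains_def ind_def by auto
  moreover have "bd \<Delta> i (cc t) = (\<lambda>_. 0)"
    unfolding cc_def bd_diff using gam[OF t] bd_U_eq by auto
  ultimately show ?thesis unfolding cycles_def by (simp add: zero_fun_def)
qed

lemma cc_val: "t \<in> Th \<Longrightarrow> s \<in> Th \<Longrightarrow> cc t s = (if s = t then 1 else 0)"
  using gam[of t] unfolding cc_def chains_def ind_def Th_def by auto

definition sec where "sec y = (\<lambda>F. \<Sum>t\<in>Th. y t * cc t F)"

lemma sec_cycle: "sec y \<in> cycles \<Delta> i"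
proof -
  have "sec y \<in> chains \<Delta> i" using cc_cycle unfolding sec_def chains_def cycles_def by auto
  moreover have "bd \<Delta> i (sec y) = (\<lambda>_. 0)"
    unfolding sec_def bd_lin using cc_cycle unfolding cycles_def by (auto intro!: ext sum.neutral)
  ultimately show ?thesis unfolding cycles_def by (simp add: zero_fun_def)
qed

lemma sec_val: "s \<in> Th \<Longrightarrow> sec y s = y s"
proof -
  assume s: "s \<in> Th"
  have "sec y s = (\<Sum>t\<in>Th. if s = t then y t else 0)"
    unfolding sec_def by (rule sum.cong) (auto simp: cc_val s)
  also have "\<dots> = y s" using fin_Th s by simp
  finally show ?thesis .
qed

lemma expand: fixes z :: "'a set \<Rightarrow> int" assumes z: "z \<in> cycles \<Delta> i" shows "z = sec z"
proof -
  have "(\<lambda>F. z F - sec z F) \<in> cycles \<Delta> i"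
  proof -
    have "(\<lambda>F. z F - sec z F) \<in> chains \<Delta> i" using z sec_cycle unfolding cycles_def chains_def by auto
    moreover have "bd \<Delta> i (\<lambda>F. z F - sec z F) = (\<lambda>_. 0)"
      unfolding bd_diff using z sec_cycle unfolding cycles_def by (auto simp: zero_fun_def)
    ultimately show ?thesis unfolding cycles_def by (simp add: zero_fun_def)
  qed
  from cyc_zero[OF this] sec_val show ?thesis by (auto simp: fun_eq_iff)
qed


definition yx where "yx x = (\<lambda>F. if F \<in> Th then (\<Sum>G\<in>faces \<Delta> i. cc F G * x G) else 0)"

lemma pair:
  fixes z x :: "'a set \<Rightarrow> int"
  assumes z: "z \<in> cycles \<Delta> i"
  shows "(\<Sum>G\<in>faces \<Delta> i. z G * x G) = (\<Sum>G\<in>faces \<Delta> i. z G * yx x G)"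
proof -
  have e: "\<And>G. z G = sec z G" using fun_cong[OF expand[OF z]] .
  have "(\<Sum>G\<in>faces \<Delta> i. z G * x G) = (\<Sum>G\<in>faces \<Delta> i. \<Sum>t\<in>Th. z t * (cc t G * x G))"
    by (subst e) (simp add: sec_def sum_distrib_right mult.assoc)
  also have "\<dots> = (\<Sum>t\<in>Th. \<Sum>G\<in>faces \<Delta> i. z t * (cc t G * x G))" by (rule sum.swap)
  also have "\<dots> = (\<Sum>t\<in>Th. z t * yx x t)"
    by (rule sum.cong) (auto simp: yx_def sum_distrib_left)
  also have "\<dots> = (\<Sum>G\<in>faces \<Delta> i. z G * yx x G)"
    by (rule sum.mono_neutral_left[OF finite_faces[OF scD] Th_sub]) (auto simp: yx_def)
  finally show ?thesis .
qed

lemma cobd_yx: "cobd \<Delta> (i + 1) x = cobd \<Delta> (i + 1) (yx (x :: 'a set \<Rightarrow> int))"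
proof
  fix F
  show "cobd \<Delta> (i + 1) x F = cobd \<Delta> (i + 1) (yx x) F"
  proof (cases "F \<in> faces \<Delta> (i + 1)")
    case False then show ?thesis by (simp add: cobd_def)
  next
    case True
    have cyc: "bd \<Delta> (i + 1) (ind F) \<in> cycles \<Delta> i"
      using bd_chains[of \<Delta> "i + 1" "ind F"] bd_bd[OF scD, of "i + 1" "ind F"]
      unfolding cycles_def by (simp add: zero_fun_def)
    show ?thesis
      using cobd_transpose[OF scD True, of x] cobd_transpose[OF scD True, of "yx x"]
        pair[OF cyc, of x] unfolding ind_def by simp
  qed
qed

lemma lap_yx: "laplacian \<Delta> i x = laplacian \<Delta> i (yx (x :: 'a set \<Rightarrow> int))"
  unfolding laplacian_def by (subst cobd_yx[of x]) (rule refl)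

lemma lap_cycle: "laplacian \<Delta> i (x :: 'a set \<Rightarrow> int) \<in> cycles \<Delta> i"
  using bd_chains[of \<Delta> "i + 1"] bd_bd[OF scD, of "i + 1"]
  unfolding cycles_def laplacian_def by (simp add: zero_fun_def)

end

lemma cg_carrier: "carrier (chain_group S) = {c. \<forall>F. F \<notin> S \<longrightarrow> c F = 0}"
  by (simp add: chain_group_def)

lemma cg_mult: "x \<otimes>\<^bsub>chain_group S\<^esub> y = (\<lambda>F. x F + y F)"
  by (simp add: chain_group_def)

lemma cg_one: "\<one>\<^bsub>chain_group S\<^esub> = (\<lambda>F. 0)"
  by (simp add: chain_group_def)

lemma cg_comm: "comm_group (chain_group S)"
proof (rule comm_groupI)
  fix x assume "x \<in> carrier (chain_group S)"
  then show "\<exists>y\<in>carrier (chain_group S). y \<otimes>\<^bsub>chain_group S\<^esub> x = \<one>\<^bsub>chain_group S\<^esub>"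
    by (intro bexI[of _ "\<lambda>F. - x F"]) (auto simp: cg_carrier cg_mult cg_one)
qed (auto simp: cg_carrier cg_mult cg_one)

lemma cg_inv:
  assumes "x \<in> carrier (chain_group S)"
  shows "inv\<^bsub>chain_group S\<^esub> x = (\<lambda>F. - x F)"
proof -
  interpret comm_group "chain_group S" by (rule cg_comm)
  show ?thesis by (rule inv_equality) (use assms in \<open>auto simp: cg_carrier cg_mult cg_one\<close>)
qed

context st
begin

abbreviation "G1 \<equiv> (chain_group (faces \<Delta> i))\<lparr>carrier := cycles \<Delta> i\<rparr>"
abbreviation "G2 \<equiv> chain_group Th"
abbreviation "N2 \<equiv> reduced_laplacian \<Delta> i Th ` carrier (chain_group Th)"

definition pr :: "('a set \<Rightarrow> int) \<Rightarrow> ('a set \<Rightarrow> int)" where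
  "pr z = (\<lambda>F. if F \<in> Th then z F else 0)"

lemma pr_carrier: "pr z \<in> carrier G2" by (simp add: pr_def cg_carrier)

lemma cyc_sub: "subgroup (cycles \<Delta> i :: ('a set \<Rightarrow> int) set) (chain_group (faces \<Delta> i))"
proof -
  interpret comm_group "chain_group (faces \<Delta> i)" by (rule cg_comm)
  show ?thesis
  proof (rule subgroupI)
    show "cycles \<Delta> i \<subseteq> carrier (chain_group (faces \<Delta> i))"
      by (auto simp: cycles_def chains_def cg_carrier)
    have "(\<lambda>F. 0) \<in> (cycles \<Delta> i :: ('a set \<Rightarrow> int) set)"
      by (simp add: cycles_def chains_def bd_def zero_fun_def fun_eq_iff)
    then show "(cycles \<Delta> i :: ('a set \<Rightarrow> int) set) \<noteq> {}" by auto
  next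
    fix a :: "'a set \<Rightarrow> int" assume a: "a \<in> cycles \<Delta> i"
    then have "a \<in> carrier (chain_group (faces \<Delta> i))" by (auto simp: cycles_def chains_def cg_carrier)
    then show "inv\<^bsub>chain_group (faces \<Delta> i)\<^esub> a \<in> cycles \<Delta> i"
      using a by (simp add: cg_inv cycles_def chains_def bd_neg zero_fun_def)
  next
    fix a b :: "'a set \<Rightarrow> int" assume "a \<in> cycles \<Delta> i" "b \<in> cycles \<Delta> i"
    then show "a \<otimes>\<^bsub>chain_group (faces \<Delta> i)\<^esub> b \<in> cycles \<Delta> i"
      by (simp add: cg_mult cycles_def chains_def bd_add zero_fun_def fun_eq_iff)
  qed
qed

lemma G1_group: "group G1"
  by (rule subgroup.subgroup_is_group[OF cyc_sub]) (rule comm_group.axioms(2)[OF cg_comm])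

lemma N2_sub: "subgroup N2 G2"
proof -
  interpret comm_group G2 by (rule cg_comm)
  show ?thesis
  proof (rule subgroupI)
    show "N2 \<subseteq> carrier G2" by (auto simp: cg_carrier reduced_laplacian_def)
    show "N2 \<noteq> {}" by (auto simp: cg_carrier)
  next
    fix a assume "a \<in> N2"
    then obtain y where y: "y \<in> carrier G2" "a = reduced_laplacian \<Delta> i Th y" by auto
    have "inv\<^bsub>G2\<^esub> a = reduced_laplacian \<Delta> i Th (\<lambda>F. - y F)"
      using y by (subst cg_inv) (auto simp: cg_carrier reduced_laplacian_def lap_neg)
    moreover have "(\<lambda>F. - y F) \<in> carrier G2" using y by (auto simp: cg_carrier)
    ultimately show "inv\<^bsub>G2\<^esub> a \<in> N2" by auto
  next
    fix a b assume "a \<in> N2" "b \<in> N2"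
    then obtain y y' where y: "y \<in> carrier G2" "a = reduced_laplacian \<Delta> i Th y"
      and y': "y' \<in> carrier G2" "b = reduced_laplacian \<Delta> i Th y'" by auto
    have "a \<otimes>\<^bsub>G2\<^esub> b = reduced_laplacian \<Delta> i Th (\<lambda>F. y F + y' F)"
      using y y' by (auto simp: cg_mult reduced_laplacian_def lap_add)
    moreover have "(\<lambda>F. y F + y' F) \<in> carrier G2" using y y' by (auto simp: cg_carrier)
    ultimately show "a \<otimes>\<^bsub>G2\<^esub> b \<in> N2" by auto
  qed
qed

lemma N2_normal: "normal N2 G2"
  by (rule comm_group.subgroup_imp_normal[OF cg_comm N2_sub])

definition hh where "hh z = N2 #>\<^bsub>G2\<^esub> pr z"

lemma hh_hom: "group_hom G1 (G2 Mod N2) hh"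
proof -
  interpret N: normal N2 G2 by (rule N2_normal)
  show ?thesis
  unfolding group_hom_def group_hom_axioms_def
  proof (intro conjI)
    show "group G1" by (rule G1_group)
    show "group (G2 Mod N2)" by (rule N.factorgroup_is_group)
    show "hh \<in> hom G1 (G2 Mod N2)"
    proof (rule homI)
      fix z assume "z \<in> carrier G1"
      show "hh z \<in> carrier (G2 Mod N2)"
        unfolding hh_def FactGroup_def RCOSETS_def using pr_carrier by auto
    next
      fix z w assume "z \<in> carrier G1" "w \<in> carrier G1"
      have "pr (z \<otimes>\<^bsub>G1\<^esub> w) = pr z \<otimes>\<^bsub>G2\<^esub> pr w"
        by (auto simp: pr_def cg_mult)
      then show "hh (z \<otimes>\<^bsub>G1\<^esub> w) = hh z \<otimes>\<^bsub>G2 Mod N2\<^esub> hh w"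
        unfolding hh_def using N.rcos_sum[OF pr_carrier pr_carrier, of z w] by simp
    qed
  qed
qed

lemma hh_onto: "hh ` carrier G1 = carrier (G2 Mod N2)"
proof
  show "hh ` carrier G1 \<subseteq> carrier (G2 Mod N2)"
    using group_hom.homh[OF hh_hom] unfolding hom_def by auto
  show "carrier (G2 Mod N2) \<subseteq> hh ` carrier G1"
  proof
    fix X assume "X \<in> carrier (G2 Mod N2)"
    then obtain a where a: "a \<in> carrier G2" "X = N2 #>\<^bsub>G2\<^esub> a"
      unfolding FactGroup_def RCOSETS_def by auto
    have "pr (sec a) = a" using a sec_val by (auto simp: pr_def cg_carrier)
    then have "X = hh (sec a)" using a by (simp add: hh_def)
    moreover have "sec a \<in> carrier G1" using sec_cycle by simp
    ultimately show "X \<in> hh ` carrier G1" by blast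
  qed
qed

lemma kernel_eq: "kernel G1 (G2 Mod N2) hh = laplacian \<Delta> i ` chains \<Delta> i"
proof -
  interpret G2g: group G2 using cg_comm comm_group.axioms(2) by blast
  have key: "\<And>z. z \<in> cycles \<Delta> i \<Longrightarrow> hh z = N2 \<longleftrightarrow> pr z \<in> N2"
    unfolding hh_def using G2g.coset_join1[OF _ pr_carrier N2_sub]
      G2g.coset_join2[OF pr_carrier N2_sub] by blast
  show ?thesis
  proof
    show "kernel G1 (G2 Mod N2) hh \<subseteq> laplacian \<Delta> i ` chains \<Delta> i"
    proof
      fix z assume "z \<in> kernel G1 (G2 Mod N2) hh"
      then have z: "z \<in> cycles \<Delta> i" "hh z = N2" unfolding kernel_def by auto
      then have "pr z \<in> N2" using key by blast
      then obtain y where y: "y \<in> carrier G2" "pr z = reduced_laplacian \<Delta> i Th y" by auto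
      have yc: "y \<in> chains \<Delta> i" using y Th_sub by (auto simp: cg_carrier chains_def)
      have "(\<lambda>F. z F - laplacian \<Delta> i y F) \<in> cycles \<Delta> i"
        using z(1) lap_cycle[of y] unfolding cycles_def chains_def
        by (auto simp: bd_diff zero_fun_def fun_eq_iff)
      moreover have "\<forall>t\<in>Th. z t - laplacian \<Delta> i y t = 0"
      proof
        fix t assume "t \<in> Th"
        with fun_cong[OF y(2), of t] show "z t - laplacian \<Delta> i y t = 0"
          by (simp add: pr_def reduced_laplacian_def)
      qed
      ultimately have "(\<lambda>F. z F - laplacian \<Delta> i y F) = (\<lambda>_. 0)" by (rule cyc_zero)
      then have "z = laplacian \<Delta> i y" by (auto simp: fun_eq_iff)
      then show "z \<in> laplacian \<Delta> i ` chains \<Delta> i" using yc by auto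
    qed
    show "laplacian \<Delta> i ` chains \<Delta> i \<subseteq> kernel G1 (G2 Mod N2) hh"
    proof
      fix z :: "'a set \<Rightarrow> int" assume "z \<in> laplacian \<Delta> i ` chains \<Delta> i"
      then obtain x where x: "z = laplacian \<Delta> i x" by auto
      have zc: "z \<in> cycles \<Delta> i" using x lap_cycle by simp
      have "pr z = reduced_laplacian \<Delta> i Th (yx x)"
        using x lap_yx[of x] by (auto simp: pr_def reduced_laplacian_def)
      moreover have "yx x \<in> carrier G2" by (auto simp: yx_def cg_carrier)
      ultimately have "pr z \<in> N2" by auto
      then have "hh z = N2" using key zc by blast
      then show "z \<in> kernel G1 (G2 Mod N2) hh" using zc unfolding kernel_def by simp
    qed
  qed
qed

lemma iso: "G1 Mod (laplacian \<Delta> i ` chains \<Delta> i) \<cong> G2 Mod N2"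
  using group_hom.FactGroup_iso[OF hh_hom hh_onto] kernel_eq by simp

end

theorem mainTheorem1:
  fixes \<Delta> \<Upsilon> :: "'a::linorder set set" and d i :: int
  assumes "APC \<Delta> d"
    and "0 \<le> i" and "i < d"
    and "spanning_tree (skeleton \<Delta> i) i \<Upsilon>"
    and "homology_vanishes TYPE(int) \<Upsilon> (i - 1)"
  shows "critical_group \<Delta> i \<cong>
           (chain_group (faces \<Delta> i - faces \<Upsilon> i)
              Mod (reduced_laplacian \<Delta> i (faces \<Delta> i - faces \<Upsilon> i)
                     ` carrier (chain_group (faces \<Delta> i - faces \<Upsilon> i))))"
proof -
  have scD: "simplicial_complex \<Delta>" using assms(1) unfolding APC_def pure_dim_def by auto
  have scU: "simplicial_complex \<Upsilon>" and US: "\<Upsilon> \<subseteq> skeleton \<Delta> i"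
    and sk: "skeleton \<Upsilon> (i - 1) = skeleton (skeleton \<Delta> i) (i - 1)"
    and Hi: "homology_vanishes TYPE(int) \<Upsilon> i"
    using assms(4) unfolding spanning_tree_def by auto
  have UD: "\<Upsilon> \<subseteq> \<Delta>" using US unfolding skeleton_def by auto
  have Ucard: "\<forall>F\<in>\<Upsilon>. int (card F) \<le> i + 1" using US unfolding skeleton_def by auto
  have sk2: "\<And>F. (F \<in> \<Upsilon> \<and> int (card F) \<le> i) \<longleftrightarrow> (F \<in> \<Delta> \<and> int (card F) \<le> i)"
  proof -
    fix F
    have "(F \<in> skeleton \<Upsilon> (i - 1)) \<longleftrightarrow> (F \<in> skeleton (skeleton \<Delta> i) (i - 1))" using sk by simp
    then show "(F \<in> \<Upsilon> \<and> int (card F) \<le> i) \<longleftrightarrow> (F \<in> \<Delta> \<and> int (card F) \<le> i)"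
      unfolding skeleton_def by auto
  qed
  have feq: "\<forall>j. j \<le> i - 1 \<longrightarrow> faces \<Upsilon> j = faces \<Delta> j"
  proof (intro allI impI)
    fix j assume j: "j \<le> i - 1"
    show "faces \<Upsilon> j = faces \<Delta> j"
      unfolding faces_def using sk2 j by force
  qed
  interpret st \<Delta> \<Upsilon> i
    using scD scU UD Ucard feq Hi assms(5) by unfold_locales auto
  show ?thesis using iso unfolding critical_group_def Th_def .
qed

end
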